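(* For every $d\ge1$, $t>0$ and $\epsilon>0$, $r^*_{t,\epsilon,d}\ge r^*_{t,\epsilon,1}$.
   Context: Training points $y_k\boldsymbol e_1\in\mathbb R^d$, $k\in[n]$, $y_k=2(k-1)\Delta-D$, $\Delta=D/(n-1)$. $p_{\mathcal N}(x;\sigma)=(\sqrt{2\pi}\sigma)^{-1}e^{-x^2/(2\sigma^2)}$; $p^{(n,1)}_t(x)=\frac1n\sum_kp_{\mathcal N}(x-y_k;\sqrt t)$; $p^{(n,d)}_t(\boldsymbol x)=p^{(n,1)}_t(x_1)\prod_{i\ge2}p_{\mathcal N}(x_i;\sqrt t)$; $L^{(n,d)}_t[\boldsymbol f]=t\,\mathbb E_{p^{(n,d)}_t}\|\boldsymbol f-\nabla\log p^{(n,d)}_t\|^2$ for measurable $\boldsymbol f:\mathbb R^d\to\mathbb R^d$. Admissible $\boldsymbol f$: every line restriction $h_{\boldsymbol w,\boldsymbol b}(x)=\boldsymbol f(\boldsymbol wx+\boldsymbol b)$ ($\boldsymbol w\in\mathbb S^{d-1}$, $\boldsymbol b\in\mathbb R^d$) is continuous and twice differentiable outside a finite set $N_{\boldsymbol w,\boldsymbol b}$; $R^{(d)}[\boldsymbol f]=\sup_{\boldsymbol w,\boldsymbol b}\sup\{\sum_i\|h'_{\boldsymbol w,\boldsymbol b}(x_{i+1})-h'_{\boldsymbol w,\boldsymbol b}(x_i)\|:x_1<\dots<x_m\in\mathbb R\setminus N_{\boldsymbol w,\boldsymbol b}\}$. $r^*_{t,\epsilon,d}=\inf\{R^{(d)}[\boldsymbol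 f]:\boldsymbol f\text{ admissible},\ L^{(n,d)}_t[\boldsymbol f]<\epsilon\}$. *)

theory Defs
  imports "HOL-Probability.Probability"
begin

definition pN :: "real \<Rightarrow> real \<Rightarrow> real" where
  "pN x \<sigma> = exp (- x\<^sup>2 / (2 * \<sigma>\<^sup>2)) / (sqrt (2 * pi) * \<sigma>)"

definition ypt :: "nat \<Rightarrow> real \<Rightarrow> nat \<Rightarrow> real" where
  "ypt n D k = 2 * (real k - 1) * (D / (real n - 1)) - D"

definition p1 :: "nat \<Rightarrow> real \<Rightarrow> real \<Rightarrow> real \<Rightarrow> real" where
  "p1 n D t x = (1 / real n) * (\<Sum>k = 1..n. pN (x - ypt n D k) (sqrt t))"

text \<open>R^d is real^'d; the index 1 plays the role of the first coordinate (direction e_1).\<close>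
definition pd :: "nat \<Rightarrow> real \<Rightarrow> real \<Rightarrow> real^'d::{finite,one} \<Rightarrow> real" where
  "pd n D t x = p1 n D t (x $ 1) * (\<Prod>i \<in> UNIV - {1}. pN (x $ i) (sqrt t))"

definition grad :: "('a::euclidean_space \<Rightarrow> real) \<Rightarrow> 'a \<Rightarrow> 'a" where
  "grad g x = (SOME v. (g has_derivative (\<lambda>h. v \<bullet> h)) (at x))"

definition Lloss :: "nat \<Rightarrow> real \<Rightarrow> real \<Rightarrow> (real^('d::{finite,one}) \<Rightarrow> real^('d::{finite,one})) \<Rightarrow> ennreal" where
  "Lloss n D t f = ennreal t *
     (\<integral>\<^sup>+ x. ennreal ((norm (f x - grad (\<lambda>y. ln (pd n D t y)) x))\<^sup>2 * pd n D t x) \<partial>lborel)"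

definition line_restr :: "('a::real_normed_vector \<Rightarrow> 'b) \<Rightarrow> 'a \<Rightarrow> 'a \<Rightarrow> real \<Rightarrow> 'b" where
  "line_restr f w b x = f (x *\<^sub>R w + b)"

definition twice_diff_at :: "(real \<Rightarrow> 'b::real_normed_vector) \<Rightarrow> real \<Rightarrow> bool" where
  "twice_diff_at h x \<longleftrightarrow>
     (\<exists>e>0. \<forall>y\<in>ball x e. h differentiable (at y)) \<and>
     (\<lambda>y. vector_derivative h (at y)) differentiable (at x)"

definition bad_set :: "(real \<Rightarrow> 'b::real_normed_vector) \<Rightarrow> real set" where
  "bad_set h = {x. \<not> twice_diff_at h x}"

definition admissible :: "('a::real_normed_vector \<Rightarrow> 'a) \<Rightarrow> bool" where
  "admissible f \<longleftrightarrow> (\<forall>w b. norm w = 1 \<longrightarrow>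
     continuous_on UNIV (line_restr f w b) \<and> finite (bad_set (line_restr f w b)))"

text \<open>Total variation of h' over R \ N (ereal-valued supremum).\<close>
definition var_deriv :: "(real \<Rightarrow> 'b::real_normed_vector) \<Rightarrow> ereal" where
  "var_deriv h = (SUP (m, xs) \<in> {(m, xs). (\<forall>i<m. xs i \<notin> bad_set h) \<and> (\<forall>i. Suc i < m \<longrightarrow> xs i < xs (Suc i))}.
      ereal (\<Sum>i<m - 1. norm (vector_derivative h (at (xs (Suc i))) - vector_derivative h (at (xs i)))))"

definition Rreg :: "('a::real_normed_vector \<Rightarrow> 'a) \<Rightarrow> ereal" where
  "Rreg f = (SUP (w, b) \<in> {(w, b). norm w = 1}. var_deriv (line_restr f w b))"

definition r_star :: "nat \<Rightarrow> real \<Rightarrow> real \<Rightarrow> real \<Rightarrow> 'd::{finite,one} itself \<Rightarrow> ereal" where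
  "r_star n D t \<epsilon> _ = (INF f \<in> {f :: real^('d::{finite,one}) \<Rightarrow> real^('d::{finite,one}). f \<in> borel_measurable borel \<and> admissible f
        \<and> Lloss n D t f < ennreal \<epsilon>}. Rreg f)"

end

theory Submission imports Defs begin


definition pNd :: "real \<Rightarrow> real \<Rightarrow> real" where
  "pNd z t = pN z (sqrt t) * (- z / t)"
definition p1d :: "nat \<Rightarrow> real \<Rightarrow> real \<Rightarrow> real \<Rightarrow> real" where
  "p1d n D t x = (1 / real n) * (\<Sum>k = 1..n. pNd (x - ypt n D k) t)"
definition sc :: "nat \<Rightarrow> real \<Rightarrow> real \<Rightarrow> real \<Rightarrow> real" where
  "sc n D t x = p1d n D t x / p1 n D t x"

lemma pN_pos: "t > 0 \<Longrightarrow> pN z (sqrt t) > 0"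
  by (simp add: pN_def)

lemma pN_deriv: assumes "t > 0" shows "((\<lambda>z. pN z (sqrt t)) has_real_derivative pNd z t) (at z)"
proof -
  have st: "(sqrt t)\<^sup>2 = t" using assms by simp
  have sp: "sqrt t > 0" using assms by simp
  show ?thesis unfolding pN_def pNd_def st using sp assms
    by (auto intro!: derivative_eq_intros simp: field_simps)
qed

lemma p1_pos: assumes "n \<ge> 1" "t > 0" shows "p1 n D t x > 0"
proof -
  have "{1..n} \<noteq> {}" using assms by auto
  then show ?thesis
  unfolding p1_def using assms by (intro mult_pos_pos sum_pos) (auto simp: pN_pos)
qed

lemma p1_deriv: assumes "t > 0" shows "(p1 n D t has_real_derivative p1d n D t x) (at x)"
proof (cases "n = 0")
  case False
  then show ?thesis unfolding p1_def[abs_def] p1d_def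
  by (auto intro!: derivative_eq_intros DERIV_chain2[OF pN_deriv[OF assms]])
qed (simp add: p1_def[abs_def] p1d_def)

lemma lnp1_deriv: assumes "n \<ge> 1" "t > 0"
  shows "((\<lambda>x. ln (p1 n D t x)) has_real_derivative sc n D t x) (at x)"
  using DERIV_chain2[OF DERIV_ln[OF p1_pos[OF assms, of D x]] p1_deriv[OF assms(2)]] by (simp add: sc_def divide_inverse mult.commute)

lemma lnpN_deriv: assumes "t > 0"
  shows "((\<lambda>z. ln (pN z (sqrt t))) has_real_derivative - z / t) (at z)"
  using DERIV_chain2[OF DERIV_ln[OF pN_pos[OF assms, of z]] pN_deriv[OF assms]] pN_pos[OF assms, of z]
  by (simp add: pNd_def field_simps)

lemma sc_cont: assumes "n \<ge> 1" "t > 0" shows "continuous_on UNIV (sc n D t)"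
proof -
  have "continuous_on UNIV (p1d n D t)" "continuous_on UNIV (p1 n D t)"
    unfolding p1d_def[abs_def] p1_def[abs_def] pNd_def pN_def
    using assms by (auto intro!: continuous_intros)
  then show ?thesis unfolding sc_def[abs_def]
    using p1_pos[OF assms] by (auto intro!: continuous_intros simp: less_imp_neq[symmetric])
qed

lemma grad_eq: assumes "(g has_derivative (\<lambda>h. v \<bullet> h)) (at x)" shows "grad g x = v"
proof -
  have "\<exists>v. (g has_derivative (\<lambda>h. v \<bullet> h)) (at x)" using assms by blast
  then have "(g has_derivative (\<lambda>h. grad g x \<bullet> h)) (at x)" unfolding grad_def by (rule someI_ex)
  from has_derivative_unique[OF this assms] have "(\<lambda>h. grad g x \<bullet> h) = (\<lambda>h. v \<bullet> h)" .
  then have "(grad g x - v) \<bullet> (grad g x - v) = 0" by (metis (no_types) inner_diff_left diff_self)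
  then show ?thesis by simp
qed

lemma coord_deriv:
  assumes "(\<phi> has_real_derivative c) (at ((x::real^'d) $ i))"
  shows "((\<lambda>y::real^'d. \<phi> (y $ i)) has_derivative (\<lambda>h. (c *\<^sub>R axis i 1) \<bullet> h)) (at x)"
proof -
  have "((\<lambda>y::real^'d. y $ i) has_derivative (\<lambda>h. h $ i)) (at x)"
    by (rule bounded_linear.has_derivative[OF bounded_linear_vec_nth has_derivative_ident])
  from DERIV_compose_FDERIV[OF assms this] show ?thesis
    by (simp add: inner_axis' mult.commute)
qed

lemma grad_pd:
  assumes "n \<ge> 1" "t > 0"
  shows "grad (\<lambda>y. ln (pd n D t y)) (x::real^'d::{finite,one}) $ 1 = sc n D t (x $ 1)"
proof -
  have eq: "(\<lambda>y. ln (pd n D t y)) = (\<lambda>y::real^'d::{finite,one}. ln (p1 n D t (y $ 1)) + (\<Sum>i\<in>UNIV-{1}. ln (pN (y $ i) (sqrt t))))"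
    unfolding pd_def using p1_pos[OF assms] pN_pos[OF assms(2)]
    by (auto simp: fun_eq_iff ln_mult prod_pos ln_prod less_imp_neq[symmetric])
  define v where "v = sc n D t (x $ 1) *\<^sub>R axis (1::'d::{finite,one}) (1::real) + (\<Sum>i\<in>UNIV-{1}. (- (x $ i) / t) *\<^sub>R axis i 1)"
  have "((\<lambda>y::real^'d::{finite,one}. ln (p1 n D t (y $ 1)) + (\<Sum>i\<in>UNIV-{1}. ln (pN (y $ i) (sqrt t)))) has_derivative
     (\<lambda>h. (sc n D t (x $ 1) *\<^sub>R axis (1::'d::{finite,one}) (1::real)) \<bullet> h + (\<Sum>i\<in>UNIV-{1}. ((- (x $ i) / t) *\<^sub>R axis i 1) \<bullet> h))) (at x)"
    by (intro has_derivative_add has_derivative_sum coord_deriv lnp1_deriv[OF assms] lnpN_deriv[OF assms(2)])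
  then have "((\<lambda>y. ln (pd n D t y)) has_derivative (\<lambda>h. v \<bullet> h)) (at x)"
    unfolding eq v_def by (simp add: inner_add_left inner_sum_left)
  then have "grad (\<lambda>y. ln (pd n D t y)) x = v" by (rule grad_eq)
  then show ?thesis by (simp add: v_def axis_def)
qed



lemma K_vd:
  assumes "bounded_linear K" "h differentiable (at y)"
  shows "((\<lambda>x. K (h x)) has_vector_derivative K (vector_derivative h (at y))) (at y)"
  using bounded_linear.has_vector_derivative[OF assms(1)] assms(2) vector_derivative_works by blast

lemma K_vd_eq:
  assumes "bounded_linear K" "h differentiable (at y)"
  shows "vector_derivative (\<lambda>x. K (h x)) (at y) = K (vector_derivative h (at y))"
  by (rule vector_derivative_at[OF K_vd[OF assms]])

lemma K_twice:
  assumes K: "bounded_linear K" and tw: "twice_diff_at h x"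
  shows "twice_diff_at (\<lambda>x. K (h x)) x"
proof -
  from tw obtain e where e: "e > 0" "\<forall>y\<in>ball x e. h differentiable (at y)"
    and d2: "(\<lambda>y. vector_derivative h (at y)) differentiable (at x)"
    unfolding twice_diff_at_def by blast
  have "\<forall>y\<in>ball x e. (\<lambda>x. K (h x)) differentiable (at y)"
    using K_vd[OF K] e(2) differentiableI_vector by blast
  moreover have "(\<lambda>y. K (vector_derivative h (at y))) differentiable (at x)"
    using differentiable_compose[OF bounded_linear_imp_differentiable[OF K] d2] by (simp add: o_def)
  then have "(\<lambda>y. vector_derivative (\<lambda>x. K (h x)) (at y)) differentiable (at x)"
    by (rule differentiable_transform_within[where d=e and s=UNIV, OF _ e(1)])
       (use K_vd_eq[OF K] e(2) in \<open>auto simp: dist_commute\<close>)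
  ultimately show ?thesis unfolding twice_diff_at_def using e(1) by blast
qed

lemma K_bad: "bounded_linear K \<Longrightarrow> bad_set (\<lambda>x. K (h x)) \<subseteq> bad_set h"
  unfolding bad_set_def using K_twice by blast

lemma K_var:
  assumes K: "bounded_linear K" and Kn: "\<And>u. norm (K u) \<le> norm u" and fin: "finite (bad_set h)"
  shows "var_deriv (\<lambda>x. K (h x)) \<le> var_deriv h"
  unfolding var_deriv_def[of "\<lambda>x. K (h x)"]
proof (rule SUP_least, clarify)
  fix m and xs :: "nat \<Rightarrow> real"
  assume nb: "\<forall>i<m. xs i \<notin> bad_set (\<lambda>x. K (h x))" and inc: "\<forall>i. Suc i < m \<longrightarrow> xs i < xs (Suc i)"
  define g where "g = (\<lambda>x. K (h x))"
  define g' where "g' = (\<lambda>y. vector_derivative g (at y))"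
  define h' where "h' = (\<lambda>y. vector_derivative h (at y))"
  define z where "z = (\<lambda>k i. xs i + inverse (real (Suc k)))"
  define S where "S = (\<lambda>xs. \<Sum>i<m - 1. norm (g' (xs (Suc i)) - g' (xs i)))"
  have ev: "eventually (\<lambda>k. \<forall>i\<in>{..<m}. z k i \<notin> bad_set h) sequentially"
  proof (rule eventually_ball_finite[where P="\<lambda>k i. z k i \<notin> bad_set h"], simp, intro ballI)
    fix i assume "i \<in> {..<m}"
    have inj: "inj (\<lambda>k. xs i + inverse (real (Suc k)))"
      by (auto simp: inj_def)
    have "finite ((\<lambda>k. xs i + inverse (real (Suc k))) -` bad_set h)"
      by (rule finite_vimageI[OF fin inj])
    then have "finite {k. \<not> z k i \<notin> bad_set h}" by (simp add: z_def vimage_def)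
    then show "eventually (\<lambda>k. z k i \<notin> bad_set h) sequentially"
      by (simp add: cofinite_eq_sequentially[symmetric] eventually_cofinite)
  qed
  have diffh: "h differentiable (at y)" if "y \<notin> bad_set h" for y
    using that unfolding bad_set_def twice_diff_at_def by auto
  have le: "ereal (S (z k)) \<le> var_deriv h" if "\<forall>i\<in>{..<m}. z k i \<notin> bad_set h" for k
  proof -
    have "S (z k) \<le> (\<Sum>i<m - 1. norm (h' (z k (Suc i)) - h' (z k i)))"
      unfolding S_def
    proof (rule sum_mono)
      fix i assume "i \<in> {..<m - 1}"
      then have "i < m" "Suc i < m" by auto
      then have "g' (z k (Suc i)) - g' (z k i) = K (h' (z k (Suc i)) - h' (z k i))"
        using that K_vd_eq[OF K diffh] linear_diff[OF bounded_linear.linear[OF K]]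
        by (simp add: g'_def g_def h'_def)
      then show "norm (g' (z k (Suc i)) - g' (z k i)) \<le> norm (h' (z k (Suc i)) - h' (z k i))"
        using Kn by simp
    qed
    also have "ereal \<dots> \<le> var_deriv h"
      unfolding var_deriv_def h'_def
      by (rule SUP_upper2[of "(m, z k)"]) (use that inc in \<open>auto simp: z_def\<close>)
    finally show ?thesis by simp
  qed
  have cont: "isCont g' (xs i)" if "i < m" for i
  proof -
    have "twice_diff_at g (xs i)" using nb that unfolding bad_set_def g_def by auto
    then have "g' differentiable (at (xs i))" unfolding twice_diff_at_def g'_def by auto
    then show ?thesis by (rule differentiable_imp_continuous_within)
  qed
  have zt: "(\<lambda>k. z k i) \<longlonglongrightarrow> xs i" for i
    unfolding z_def using tendsto_add[OF tendsto_const LIMSEQ_inverse_real_of_nat, of "xs i"] by simp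
  have "(\<lambda>k. S (z k)) \<longlonglongrightarrow> S xs"
    unfolding S_def
    by (intro tendsto_sum tendsto_norm tendsto_diff isCont_tendsto_compose[OF cont zt]) auto
  then have "(\<lambda>k. ereal (S (z k))) \<longlonglongrightarrow> ereal (S xs)" by (rule tendsto_ereal)
  then have "ereal (S xs) \<le> var_deriv h"
    by (rule tendsto_upperbound) (use eventually_mono[OF ev le] in auto)
  then show "ereal (\<Sum>i<m - 1. norm (vector_derivative (\<lambda>x. K (h x)) (at (xs (Suc i))) - vector_derivative (\<lambda>x. K (h x)) (at (xs i)))) \<le> var_deriv h"
    by (simp add: S_def g'_def g_def)
qed



lemma vec_sum_nth: "(\<Sum>b\<in>Basis. \<omega> b *\<^sub>R b :: real^'n) $ i = \<omega> (axis i 1)"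
proof -
  have "(\<Sum>b\<in>Basis. \<omega> b *\<^sub>R b :: real^'n) $ i = (\<Sum>b\<in>Basis. \<omega> b *\<^sub>R b :: real^'n) \<bullet> axis i 1"
    by (simp add: inner_axis)
  also have "\<dots> = (\<Sum>b\<in>Basis. \<omega> b * (b \<bullet> axis i (1::real)))"
    by (simp add: inner_sum_left)
  also have "\<dots> = \<omega> (axis i 1)"
    by (subst sum.mono_neutral_right[of Basis "{axis i 1}"]) (auto simp: inner_Basis Basis_vec_def axis_eq_axis)
  finally show ?thesis .
qed

lemma pd_cont: "n \<ge> 1 \<Longrightarrow> t > 0 \<Longrightarrow> continuous_on UNIV (pd n D t :: real^'d::{finite,one} \<Rightarrow> real)"
  unfolding pd_def[abs_def] p1_def pN_def
  by (auto intro!: continuous_intros)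

lemma Basis_vec1: "(Basis :: (real^1) set) = {axis 1 1}"
  by (auto simp: Basis_vec_def)

lemma nn_integral_vec1:
  assumes [measurable]: "\<phi> \<in> borel_measurable borel"
  shows "(\<integral>\<^sup>+ u. \<phi> ((u::real^1) $ 1) \<partial>lborel) = (\<integral>\<^sup>+ x. \<phi> x \<partial>lborel)"
proof -
  have "(\<integral>\<^sup>+x. (\<Prod>b\<in>(Basis::(real^1) set). \<phi> (x \<bullet> b)) \<partial>lborel) = (\<Prod>b\<in>(Basis::(real^1) set). \<integral>\<^sup>+x. \<phi> x \<partial>lborel)"
    by (rule nn_integral_lborel_prod) auto
  then show ?thesis by (simp add: Basis_vec1 inner_axis)
qed

definition K1 :: "real^'d::{finite,one} \<Rightarrow> real^1" where "K1 v = (\<chi> j. v $ 1)"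

definition gfun :: "(real^'d::{finite,one} \<Rightarrow> real^'d::{finite,one}) \<Rightarrow> real^'d::{finite,one} \<Rightarrow> real^1 \<Rightarrow> real^1" where
  "gfun f c u = K1 (f ((u $ 1) *\<^sub>R axis 1 1 + c))"

lemma K1_norm: "norm (K1 v) \<le> norm v"
  by (simp add: K1_def norm_vector_1 component_le_norm_cart)

lemma K1_bl: "bounded_linear K1"
  by (rule bounded_linear_intro[where K=1]) (auto simp: K1_def vec_eq_iff K1_norm[unfolded K1_def])

lemma gfun_line:
  "line_restr (gfun f c) w b = (\<lambda>x. K1 (line_restr f ((w $ 1) *\<^sub>R axis 1 1) ((b $ 1) *\<^sub>R axis 1 1 + c) x))"
  by (auto simp: fun_eq_iff line_restr_def gfun_def algebra_simps)

lemma normW: "norm (w::real^1) = 1 \<Longrightarrow> norm ((w $ 1) *\<^sub>R axis (1::'d::{finite,one}) (1::real)) = 1"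
  by (simp add: norm_vector_1)

lemma gfun_adm: assumes "admissible f" shows "admissible (gfun f c)"
  unfolding admissible_def
proof (intro allI impI conjI)
  fix w b :: "real^1" assume w: "norm w = 1"
  let ?h = "line_restr f ((w $ 1) *\<^sub>R axis 1 1) ((b $ 1) *\<^sub>R axis 1 1 + c)"
  have h: "continuous_on UNIV ?h" "finite (bad_set ?h)"
    using assms normW[OF w] unfolding admissible_def by blast+
  show "continuous_on UNIV (line_restr (gfun f c) w b)"
    unfolding gfun_line using h(1) linear_continuous_on[OF K1_bl]
    by (intro continuous_on_compose2[OF linear_continuous_on[OF K1_bl] h(1)]) auto
  show "finite (bad_set (line_restr (gfun f c) w b))"
    unfolding gfun_line by (rule finite_subset[OF K_bad[OF K1_bl] h(2)])
qed

lemma gfun_R: assumes "admissible f" shows "Rreg (gfun f c) \<le> Rreg f"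
  unfolding Rreg_def[of "gfun f c"]
proof (rule SUP_least, clarify)
  fix w b :: "real^1" assume w: "norm w = 1"
  let ?W = "(w $ 1) *\<^sub>R axis (1::'d::{finite,one}) (1::real)" and ?B = "(b $ 1) *\<^sub>R axis 1 1 + c"
  have h: "finite (bad_set (line_restr f ?W ?B))"
    using assms normW[OF w] unfolding admissible_def by blast
  have "var_deriv (line_restr (gfun f c) w b) \<le> var_deriv (line_restr f ?W ?B)"
    unfolding gfun_line by (rule K_var[OF K1_bl K1_norm h])
  also have "\<dots> \<le> Rreg f"
    unfolding Rreg_def by (rule SUP_upper2[of "(?W, ?B)"]) (use normW[OF w] in auto)
  finally show "var_deriv (line_restr (gfun f c) w b) \<le> Rreg f" .
qed

lemma gfun_meas: assumes [measurable]: "f \<in> borel_measurable borel" shows "gfun f c \<in> borel_measurable borel"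
proof -
  have "K1 \<in> borel_measurable (borel :: (real^'d::{finite,one}) measure)"
    by (rule borel_measurable_continuous_onI[OF linear_continuous_on[OF K1_bl]])
  moreover have "(\<lambda>u::real^1. (u $ 1) *\<^sub>R axis 1 1 + c) \<in> borel_measurable borel"
    by (rule borel_measurable_continuous_onI) (intro continuous_intros)
  ultimately show ?thesis unfolding gfun_def[abs_def] by measurable
qed

lemma sc_meas[measurable]: "n \<ge> 1 \<Longrightarrow> t > 0 \<Longrightarrow> sc n D t \<in> borel_measurable borel"
  by (rule borel_measurable_continuous_onI[OF sc_cont])

lemma p1_meas[measurable]: "p1 n D t \<in> borel_measurable borel"
  unfolding p1_def[abs_def] pN_def by measurable

lemma vnth_meas[measurable]: "(\<lambda>v::real^'n. v $ i) \<in> borel_measurable borel"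
  by (rule borel_measurable_continuous_onI[OF linear_continuous_on[OF bounded_linear_vec_nth]])

lemma line_meas[measurable]: "(\<lambda>a::real. a *\<^sub>R (v::'a::euclidean_space) + c) \<in> borel_measurable borel"
  by (rule borel_measurable_continuous_onI) (intro continuous_intros)

lemma Lloss1:
  assumes n: "n \<ge> 1" and t: "t > 0" and [measurable]: "f \<in> borel_measurable borel"
  shows "Lloss n D t (gfun f c) =
    ennreal t * (\<integral>\<^sup>+ x. ennreal (((f (x *\<^sub>R axis 1 1 + c)) $ 1 - sc n D t x)\<^sup>2 * p1 n D t x) \<partial>lborel)"
proof -
  have U: "UNIV - {1::1} = {}" by auto
  have "\<And>u::real^1. (norm (gfun f c u - grad (\<lambda>y. ln (pd n D t y)) u))\<^sup>2 * pd n D t u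
      = ((f ((u $ 1) *\<^sub>R axis 1 1 + c)) $ 1 - sc n D t (u $ 1))\<^sup>2 * p1 n D t (u $ 1)"
    apply (simp add: norm_vector_1 grad_pd[OF n t] gfun_def K1_def power2_abs)
    apply (simp add: pd_def U)
    done
  then have "Lloss n D t (gfun f c) = ennreal t * (\<integral>\<^sup>+ u. ennreal (((f (((u::real^1) $ 1) *\<^sub>R axis 1 1 + c)) $ 1 - sc n D t (u $ 1))\<^sup>2 * p1 n D t (u $ 1)) \<partial>lborel)"
    unfolding Lloss_def by simp
  also have "\<dots> = ennreal t * (\<integral>\<^sup>+ x. ennreal (((f (x *\<^sub>R axis 1 1 + c)) $ 1 - sc n D t x)\<^sup>2 * p1 n D t x) \<partial>lborel)"
    using sc_meas[OF n t] by (subst nn_integral_vec1) (auto intro!: measurable_compose[OF line_meas assms(3)])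
  finally show ?thesis .
qed



lemma pN_normal: "t > 0 \<Longrightarrow> pN x (sqrt t) = normal_density 0 (sqrt t) x"
  by (simp add: pN_def normal_density_def real_sqrt_mult field_simps)

lemma pN_int: assumes "t > 0" shows "(\<integral>\<^sup>+ x. ennreal (pN x (sqrt t)) \<partial>lborel) = 1"
proof -
  have "(\<integral>\<^sup>+ x. ennreal (normal_density 0 (sqrt t) x) \<partial>lborel) = ennreal (\<integral>x. normal_density 0 (sqrt t) x \<partial>lborel)"
    using assms by (intro nn_integral_eq_integral integrable_normal_density) auto
  then show ?thesis using assms by (simp add: pN_normal[OF assms] integral_normal_density)
qed

lemma pN_meas[measurable]: "(\<lambda>x. pN x s) \<in> borel_measurable borel"
  unfolding pN_def by measurable

lemma Basis_vec_img: "(Basis :: (real^'n) set) = (\<lambda>i. axis i 1) ` UNIV"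
  by (auto simp: Basis_vec_def)

lemma Phi_meas: "(\<lambda>w. \<Sum>b\<in>(Basis::(real^'n) set). w b *\<^sub>R b) \<in> borel_measurable (Pi\<^sub>M Basis (\<lambda>_. lborel))"
  by measurable

lemma averaging:
  fixes f :: "real^'d::{finite,one} \<Rightarrow> real^'d::{finite,one}"
  assumes n: "n \<ge> 1" and t: "t > 0" and fm[measurable]: "f \<in> borel_measurable borel"
    and L: "Lloss n D t f < ennreal \<epsilon>"
  shows "\<exists>c. Lloss n D t (gfun f c) < ennreal \<epsilon>"
proof (rule ccontr)
  assume "\<not> ?thesis"
  then have H: "\<And>c. ennreal \<epsilon> \<le> Lloss n D t (gfun f c)" by (auto simp: not_less)
  interpret P: product_sigma_finite "\<lambda>_::real^'d::{finite,one}. lborel :: real measure" by standard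
  define e where "e = axis (1::'d::{finite,one}) (1::real)"
  define Ph where "Ph = (\<lambda>w::real^'d::{finite,one} \<Rightarrow> real. \<Sum>b\<in>Basis. w b *\<^sub>R b :: real^'d::{finite,one})"
  define B' where "B' = (Basis :: (real^'d::{finite,one}) set) - {e}"
  define a where "a = (\<lambda>c y. ennreal (((f (y *\<^sub>R e + c)) $ 1 - sc n D t y)\<^sup>2 * p1 n D t y))"
  define W where "W = (\<lambda>w::real^'d::{finite,one} \<Rightarrow> real. \<Prod>b\<in>B'. pN (w b) (sqrt t))"
  define q where "q = (\<lambda>x::real^'d::{finite,one}. ennreal (((f x) $ 1 - sc n D t (x $ 1))\<^sup>2 * pd n D t x))"
  note sc_meas[OF n t, measurable]
  have pdm[measurable]: "pd n D t \<in> borel_measurable (borel :: (real^'d::{finite,one}) measure)"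
    by (rule borel_measurable_continuous_onI[OF pd_cont[OF n t]])
  have qm[measurable]: "q \<in> borel_measurable borel" unfolding q_def by measurable
  have am[measurable]: "a c \<in> borel_measurable borel" for c
    unfolding a_def by (measurable; intro measurable_compose[OF line_meas fm])
  have eB: "e \<in> Basis" by (auto simp: e_def Basis_vec_def)
  have BB: "Basis = insert e B'" "e \<notin> B'" "finite B'" using eB by (auto simp: B'_def)
  have aI: "ennreal (\<epsilon> / t) \<le> (\<integral>\<^sup>+ y. a c y \<partial>lborel)" for c
  proof -
    have "ennreal \<epsilon> \<le> ennreal t * (\<integral>\<^sup>+ y. a c y \<partial>lborel)"
      using H[of c] Lloss1[OF n t fm, of D c] by (simp add: a_def e_def)
    then have "ennreal (1/t) * ennreal \<epsilon> \<le> ennreal (1/t) * (ennreal t * (\<integral>\<^sup>+ y. a c y \<partial>lborel))"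
      by (rule mult_left_mono) simp
    also have "\<dots> = (\<integral>\<^sup>+ y. a c y \<partial>lborel)"
      using t by (simp add: mult.assoc[symmetric] ennreal_mult[symmetric])
    finally show ?thesis using t by (simp add: ennreal_mult'[symmetric])
  qed
  have Wm[measurable]: "(\<lambda>w. ennreal (W w)) \<in> borel_measurable (Pi\<^sub>M B' (\<lambda>_. lborel))"
    unfolding W_def by measurable
  have Wint: "(\<integral>\<^sup>+ w. ennreal (W w) \<partial>Pi\<^sub>M B' (\<lambda>_. lborel)) = 1"
  proof -
    have "(\<integral>\<^sup>+ w. ennreal (W w) \<partial>Pi\<^sub>M B' (\<lambda>_. lborel)) = (\<integral>\<^sup>+ w. (\<Prod>b\<in>B'. ennreal (pN (w b) (sqrt t))) \<partial>Pi\<^sub>M B' (\<lambda>_. lborel))"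
      unfolding W_def using t by (intro nn_integral_cong) (simp add: prod_ennreal less_imp_le pN_pos)
    also have "\<dots> = (\<Prod>b\<in>B'. \<integral>\<^sup>+ x. ennreal (pN x (sqrt t)) \<partial>lborel)"
      by (rule P.product_nn_integral_prod[OF BB(3)]) measurable
    also have "\<dots> = 1" using pN_int[OF t] by simp
    finally show ?thesis .
  qed
  have Phi_upd: "Ph (w(e := y)) = y *\<^sub>R e + Ph (w(e := 0))" for w y
  proof (rule vec_eq_iff[THEN iffD2], rule allI)
    fix i
    show "Ph (w(e := y)) $ i = (y *\<^sub>R e + Ph (w(e := 0))) $ i"
      unfolding vector_add_component vector_scaleR_component Ph_def vec_sum_nth
      by (cases "i = 1") (simp_all add: e_def axis_eq_axis, simp add: axis_def)
  qed
  have Phi1: "Ph (w(e := y)) $ 1 = y" for w y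
    unfolding Ph_def vec_sum_nth by (simp add: e_def)
  have Wre: "W w = (\<Prod>i\<in>UNIV-{1}. pN (w (axis i 1)) (sqrt t))" for w
  proof -
    have "B' = (\<lambda>i. axis i 1) ` (UNIV - {1::'d::{finite,one}})"
      by (auto simp: B'_def e_def Basis_vec_img axis_eq_axis)
    moreover have "inj_on (\<lambda>i. axis i (1::real)) (UNIV - {1::'d::{finite,one}})"
      by (auto simp: inj_on_def axis_eq_axis)
    ultimately show ?thesis unfolding W_def by (simp add: prod.reindex)
  qed
  have pdre: "pd n D t (Ph (w(e := y))) = p1 n D t y * W w" for w y
  proof -
    have comp: "Ph (w(e:=y)) $ i = (if i = 1 then y else w (axis i 1))" for i
      unfolding Ph_def vec_sum_nth by (simp add: e_def axis_eq_axis)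
    show ?thesis unfolding pd_def Wre comp by (auto intro!: prod.cong)
  qed
  have inner: "(\<integral>\<^sup>+ y. q (Ph (w(e := y))) \<partial>lborel) = (\<integral>\<^sup>+ y. a (Ph (w(e := 0))) y \<partial>lborel) * ennreal (W w)" for w
  proof -
    have Wnn: "W w \<ge> 0" unfolding W_def using t by (simp add: prod_nonneg less_imp_le pN_pos)
    have "(\<integral>\<^sup>+ y. q (Ph (w(e := y))) \<partial>lborel) = (\<integral>\<^sup>+ y. a (Ph (w(e := 0))) y * ennreal (W w) \<partial>lborel)"
      by (intro nn_integral_cong)
         (simp add: q_def a_def pdre Phi1 Wnn ennreal_mult''[symmetric] mult.assoc flip: Phi_upd)
    also have "\<dots> = (\<integral>\<^sup>+ y. a (Ph (w(e := 0))) y \<partial>lborel) * ennreal (W w)"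
      by (rule nn_integral_multc) measurable
    finally show ?thesis .
  qed
  have Phim[measurable]: "Ph \<in> borel_measurable (Pi\<^sub>M Basis (\<lambda>_. lborel))"
    unfolding Ph_def by (rule Phi_meas)
  have "(\<integral>\<^sup>+ x. q x \<partial>lborel) = (\<integral>\<^sup>+ w. q (Ph w) \<partial>Pi\<^sub>M Basis (\<lambda>_. lborel))"
    by (subst lborel_eq) (simp add: nn_integral_distr Ph_def)
  also have "\<dots> = (\<integral>\<^sup>+ w. (\<integral>\<^sup>+ y. q (Ph (w(e := y))) \<partial>lborel) \<partial>Pi\<^sub>M B' (\<lambda>_. lborel))"
    unfolding BB(1) by (rule P.product_nn_integral_insert[OF BB(3,2)]) (use Phim BB(1) in simp)
  also have "\<dots> \<ge> (\<integral>\<^sup>+ w. ennreal (\<epsilon> / t) * ennreal (W w) \<partial>Pi\<^sub>M B' (\<lambda>_. lborel))"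
    unfolding inner by (intro nn_integral_mono mult_right_mono aI) auto
  also have "(\<integral>\<^sup>+ w. ennreal (\<epsilon> / t) * ennreal (W w) \<partial>Pi\<^sub>M B' (\<lambda>_. lborel)) = ennreal (\<epsilon> / t)"
    by (subst nn_integral_cmult) (auto simp: Wint)
  finally have qI: "ennreal (\<epsilon> / t) \<le> (\<integral>\<^sup>+ x. q x \<partial>lborel)" .
  have "ennreal \<epsilon> = ennreal t * ennreal (\<epsilon> / t)" using t by (simp add: ennreal_mult'[symmetric])
  also have "\<dots> \<le> ennreal t * (\<integral>\<^sup>+ x. q x \<partial>lborel)" by (rule mult_left_mono[OF qI]) simp
  also have "\<dots> \<le> Lloss n D t f"
    unfolding Lloss_def
  proof (rule mult_left_mono[OF nn_integral_mono], simp_all add: q_def)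
    fix x :: "real^'d::{finite,one}"
    have "(f x $ 1 - sc n D t (x $ 1))\<^sup>2 = (\<bar>(f x - grad (\<lambda>y. ln (pd n D t y)) x) $ 1\<bar>)\<^sup>2"
      by (simp add: grad_pd[OF n t])
    also have "\<dots> \<le> (norm (f x - grad (\<lambda>y. ln (pd n D t y)) x))\<^sup>2"
      by (rule power_mono[OF component_le_norm_cart]) simp
    finally show "ennreal ((f x $ 1 - sc n D t (x $ 1))\<^sup>2 * pd n D t x) \<le> ennreal ((norm (f x - grad (\<lambda>y. ln (pd n D t y)) x))\<^sup>2 * pd n D t x)"
      using pd_cont t n by (intro ennreal_leI mult_right_mono) (auto simp: pd_def p1_pos pN_pos prod_nonneg less_imp_le)
  qed
  finally show False using L by simp
qed



theorem mainTheorem10: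
  fixes n :: nat and D t \<epsilon> :: real
  assumes "n \<ge> 2" and "D > 0" and "t > 0" and "\<epsilon> > 0"
  shows "r_star n D t \<epsilon> TYPE('d::{finite,one}) \<ge> r_star n D t \<epsilon> TYPE(1)"
proof -
  have n: "n \<ge> 1" using assms(1) by simp
  show ?thesis
    unfolding r_star_def
  proof (rule INF_greatest, clarify)
    fix f :: "real^'d::{finite,one} \<Rightarrow> real^'d::{finite,one}"
    assume fm: "f \<in> borel_measurable borel" and adm: "admissible f" and L: "Lloss n D t f < ennreal \<epsilon>"
    obtain c where c: "Lloss n D t (gfun f c) < ennreal \<epsilon>"
      using averaging[OF n assms(3) fm L] by blast
    have "(INF g\<in>{g :: real^1 \<Rightarrow> real^1. g \<in> borel_measurable borel \<and> admissible g \<and> Lloss n D t g < ennreal \<epsilon>}. Rreg g) \<le> Rreg (gfun f c)"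
      by (rule INF_lower) (use gfun_meas[OF fm] gfun_adm[OF adm] c in auto)
    also have "\<dots> \<le> Rreg f" by (rule gfun_R[OF adm])
    finally show "(INF g\<in>{g :: real^1 \<Rightarrow> real^1. g \<in> borel_measurable borel \<and> admissible g \<and> Lloss n D t g < ennreal \<epsilon>}. Rreg g) \<le> Rreg f" .
  qed
qed

end
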